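(* Let $S$ be a scheme on $X$ and $\mathbb F$ a field. If $S$ is triply regular, then $S$ has no bad pairs.
   Context: Let $X$ be a nonempty finite set. A scheme of class $d$ on $X$ is a partition $S=\{R_0,\dots,R_d\}$ of $X\times X$ into nonempty sets such that $R_0=\{(b,b):b\in X\}$; for each $c$ there is $c'$ with $R_{c'}=\{(f,e):(e,f)\in R_c\}$; and for all $i,j,k$ the intersection number $p_{ij}^k=|\{\ell\in X:(m,\ell)\in R_i,(\ell,n)\in R_j\}|$ does not depend on $(m,n)\in R_k$. The valency is $k_a=p_{aa'}^0$; complex product $R_aR_b=\{R_c:p_{ab}^c>0\}$. For $y\in X$, $yR_a=\{z:(y,z)\in R_a\}$; $A_a\in M_X(\mathbb F)$ is the $(0,1)$ adjacency matrix of $R_a$ and $E_a^*(y)$ is the diagonal $(0,1)$-matrix with ones exactly at positions indexed by $yR_a$. The products $E_i^*(y)A_jE_\ell^*(y)$ are the triple products at $y$. $S$ is triply regular if for every $y\in X$ the $\mathbb F$-linear span of all triple products $E_i^*(y)A_jE_\ell^*(y)$ ($R_i,R_j,R_\ell\in S$) is a unital $\mathbb F$-subalgebra of $M_X(\mathbb F)$. Bad pair: $(u,v)$ is a bad pair of $S$ if there exist an integer $a\ge1$ and $R_{i_b},R_{j_b},R_{\ell_b}\in S$ ($b=0,\dots,a$) with $i_0=u$, $\ell_a=v$, $k_{i_b}=k_{\ell_b}=2$ and $p_{i_bj_b}^{\ell_b}=1$ for all $b$, $\ell_c=i_{c+1}$ for $0\le c\le a-1$, and $|R_{u'}R_v|=1$.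 *)

theory Defs
  imports Main
begin

definition is_scheme :: "'a set \<Rightarrow> nat \<Rightarrow> (nat \<Rightarrow> ('a \<times> 'a) set) \<Rightarrow> bool" where
  "is_scheme X d R \<longleftrightarrow>
     finite X \<and> X \<noteq> {} \<and>
     (\<forall>c\<le>d. R c \<noteq> {} \<and> R c \<subseteq> X \<times> X) \<and>
     (\<forall>c\<le>d. \<forall>c'\<le>d. c \<noteq> c' \<longrightarrow> R c \<inter> R c' = {}) \<and>
     (\<Union>c\<in>{0..d}. R c) = X \<times> X \<and>
     R 0 = {(b, b) | b. b \<in> X} \<and>
     (\<forall>c\<le>d. \<exists>c'\<le>d. R c' = {(f, e). (e, f) \<in> R c}) \<and>
     (\<forall>i\<le>d. \<forall>j\<le>d. \<forall>k\<le>d. \<forall>m n m' n'. (m, n) \<in> R k \<longrightarrow> (m', n') \<in> R k \<longrightarrow>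
        card {l \<in> X. (m, l) \<in> R i \<and> (l, n) \<in> R j}
      = card {l \<in> X. (m', l) \<in> R i \<and> (l, n') \<in> R j})"

text \<open>Intersection number p_ij^k, evaluated at some pair of R k.\<close>
definition inum :: "'a set \<Rightarrow> (nat \<Rightarrow> ('a \<times> 'a) set) \<Rightarrow> nat \<Rightarrow> nat \<Rightarrow> nat \<Rightarrow> nat" where
  "inum X R i j k = (let (m, n) = (SOME mn. mn \<in> R k) in
      card {l \<in> X. (m, l) \<in> R i \<and> (l, n) \<in> R j})"

definition conv_idx :: "nat \<Rightarrow> (nat \<Rightarrow> ('a \<times> 'a) set) \<Rightarrow> nat \<Rightarrow> nat" where
  "conv_idx d R c = (THE c'. c' \<le> d \<and> R c' = {(f, e). (e, f) \<in> R c})"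

definition valency :: "'a set \<Rightarrow> nat \<Rightarrow> (nat \<Rightarrow> ('a \<times> 'a) set) \<Rightarrow> nat \<Rightarrow> nat" where
  "valency X d R a = inum X R a (conv_idx d R a) 0"

text \<open>Complex product R_a R_b, as a set of indices.\<close>
definition cplx_prod :: "'a set \<Rightarrow> nat \<Rightarrow> (nat \<Rightarrow> ('a \<times> 'a) set) \<Rightarrow> nat \<Rightarrow> nat \<Rightarrow> nat set" where
  "cplx_prod X d R a b = {c. c \<le> d \<and> inum X R a b c > 0}"

text \<open>Matrices in M_X(F) as functions X \<times> X \<rightarrow> F (zero outside X).\<close>
definition mat_mult :: "'a set \<Rightarrow> ('a \<Rightarrow> 'a \<Rightarrow> 'f::field) \<Rightarrow> ('a \<Rightarrow> 'a \<Rightarrow> 'f) \<Rightarrow> ('a \<Rightarrow> 'a \<Rightarrow> 'f)" where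
  "mat_mult X A B = (\<lambda>x z. \<Sum>w\<in>X. A x w * B w z)"

definition mat_one :: "'a set \<Rightarrow> ('a \<Rightarrow> 'a \<Rightarrow> 'f::field)" where
  "mat_one X = (\<lambda>x z. if x = z \<and> x \<in> X then 1 else 0)"

definition adj_mat :: "'f itself \<Rightarrow> ('a \<times> 'a) set \<Rightarrow> ('a \<Rightarrow> 'a \<Rightarrow> 'f::field)" where
  "adj_mat _ Rel = (\<lambda>x z. if (x, z) \<in> Rel then 1 else 0)"

text \<open>Dual idempotent E_a^*(y): diagonal with ones at yR_a.\<close>
definition dual_idem :: "'f itself \<Rightarrow> 'a \<Rightarrow> ('a \<times> 'a) set \<Rightarrow> ('a \<Rightarrow> 'a \<Rightarrow> 'f::field)" where
  "dual_idem _ y Rel = (\<lambda>x z. if x = z \<and> (y, x) \<in> Rel then 1 else 0)"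

definition triple_prod :: "'f itself \<Rightarrow> 'a set \<Rightarrow> (nat \<Rightarrow> ('a \<times> 'a) set) \<Rightarrow> 'a \<Rightarrow> nat \<Rightarrow> nat \<Rightarrow> nat
     \<Rightarrow> ('a \<Rightarrow> 'a \<Rightarrow> 'f::field)" where
  "triple_prod F X R y i j l =
     mat_mult X (mat_mult X (dual_idem F y (R i)) (adj_mat F (R j))) (dual_idem F y (R l))"

text \<open>F-linear span of the triple products at y (finitely many, so all linear combinations).\<close>
definition triple_span :: "'f itself \<Rightarrow> 'a set \<Rightarrow> nat \<Rightarrow> (nat \<Rightarrow> ('a \<times> 'a) set) \<Rightarrow> 'a
     \<Rightarrow> ('a \<Rightarrow> 'a \<Rightarrow> 'f::field) set" where
  "triple_span F X d R y =
     {M. \<exists>c :: nat \<times> nat \<times> nat \<Rightarrow> 'f.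
        M = (\<lambda>x z. \<Sum>(i, j, l)\<in>{0..d} \<times> {0..d} \<times> {0..d}. c (i, j, l) * triple_prod F X R y i j l x z)}"

text \<open>The span is always an F-subspace; it is a unital subalgebra iff it contains the identity
  of M_X(F) and is closed under matrix multiplication.\<close>
definition triply_regular :: "'f::field itself \<Rightarrow> 'a set \<Rightarrow> nat \<Rightarrow> (nat \<Rightarrow> ('a \<times> 'a) set) \<Rightarrow> bool" where
  "triply_regular F X d R \<longleftrightarrow>
     (\<forall>y\<in>X. mat_one X \<in> triple_span F X d R y \<and>
        (\<forall>A\<in>triple_span F X d R y. \<forall>B\<in>triple_span F X d R y. mat_mult X A B \<in> triple_span F X d R y))"

definition bad_pair :: "'a set \<Rightarrow> nat \<Rightarrow> (nat \<Rightarrow> ('a \<times> 'a) set) \<Rightarrow> nat \<Rightarrow> nat \<Rightarrow> bool" where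
  "bad_pair X d R u v \<longleftrightarrow>
     (\<exists>a::nat. \<exists>i j l :: nat \<Rightarrow> nat. a \<ge> 1 \<and>
        (\<forall>b\<le>a. i b \<le> d \<and> j b \<le> d \<and> l b \<le> d) \<and>
        i 0 = u \<and> l a = v \<and>
        (\<forall>b\<le>a. valency X d R (i b) = 2 \<and> valency X d R (l b) = 2 \<and> inum X R (i b) (j b) (l b) = 1) \<and>
        (\<forall>c<a. l c = i (c + 1)) \<and>
        card (cplx_prod X d R (conv_idx d R u) v) = 1)"

end

theory Submission
  imports Defs
begin

lemma sch_all:
  assumes "is_scheme X d R"
  shows "finite X \<and> X \<noteq> {} \<and>
     (\<forall>c\<le>d. R c \<noteq> {} \<and> R c \<subseteq> X \<times> X) \<and>
     (\<forall>c\<le>d. \<forall>c'\<le>d. c \<noteq> c' \<longrightarrow> R c \<inter> R c' = {}) \<and>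
     (\<Union>c\<in>{0..d}. R c) = X \<times> X \<and>
     R 0 = {(b, b) | b. b \<in> X} \<and>
     (\<forall>c\<le>d. \<exists>c'\<le>d. R c' = {(f, e). (e, f) \<in> R c}) \<and>
     (\<forall>i\<le>d. \<forall>j\<le>d. \<forall>k\<le>d. \<forall>m n m' n'. (m, n) \<in> R k \<longrightarrow> (m', n') \<in> R k \<longrightarrow>
        card {l \<in> X. (m, l) \<in> R i \<and> (l, n) \<in> R j}
      = card {l \<in> X. (m', l) \<in> R i \<and> (l, n') \<in> R j})"
  using assms unfolding is_scheme_def .
lemma sch_fin: assumes a: "is_scheme X d R" shows "finite X" by (rule sch_all[OF a, THEN conjunct1])
lemma sch_ne: assumes a: "is_scheme X d R" and "c \<le> d" shows "R c \<noteq> {}" using sch_all[OF a, THEN conjunct2, THEN conjunct2, THEN conjunct1, rule_format, OF assms(2)] by (rule conjunct1)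
lemma sch_sub: assumes a: "is_scheme X d R" and "c \<le> d" shows "R c \<subseteq> X \<times> X" using sch_all[OF a, THEN conjunct2, THEN conjunct2, THEN conjunct1, rule_format, OF assms(2)] by (rule conjunct2)
lemma sch_dj: assumes a: "is_scheme X d R" and "c \<le> d" "c' \<le> d" "c \<noteq> c'" shows "R c \<inter> R c' = {}" using sch_all[OF a, THEN conjunct2, THEN conjunct2, THEN conjunct2, THEN conjunct1, rule_format, OF assms(2-4)] .
lemma sch_cov: assumes a: "is_scheme X d R" shows "(\<Union>c\<in>{0..d}. R c) = X \<times> X" by (rule sch_all[OF a, THEN conjunct2, THEN conjunct2, THEN conjunct2, THEN conjunct2, THEN conjunct1])
lemma sch_0: assumes a: "is_scheme X d R" shows "R 0 = {(b, b) | b. b \<in> X}" by (rule sch_all[OF a, THEN conjunct2, THEN conjunct2, THEN conjunct2, THEN conjunct2, THEN conjunct2, THEN conjunct1])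
lemma sch_cv: assumes a: "is_scheme X d R" and "c \<le> d" shows "\<exists>c'\<le>d. R c' = {(f, e). (e, f) \<in> R c}" using sch_all[OF a, THEN conjunct2, THEN conjunct2, THEN conjunct2, THEN conjunct2, THEN conjunct2, THEN conjunct2, THEN conjunct1, rule_format, OF assms(2)] .
lemma sch_reg:
  assumes a: "is_scheme X d R" "i \<le> d" "j \<le> d" "k \<le> d" "(m, n) \<in> R k" "(m', n') \<in> R k"
  shows "card {l \<in> X. (m, l) \<in> R i \<and> (l, n) \<in> R j} = card {l \<in> X. (m', l) \<in> R i \<and> (l, n') \<in> R j}"
proof -
  note H = sch_all[OF a(1), THEN conjunct2, THEN conjunct2, THEN conjunct2, THEN conjunct2,
     THEN conjunct2, THEN conjunct2, THEN conjunct2]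
  show ?thesis using H[rule_format, OF a(2) a(3) a(4) a(5) a(6)] .
qed

lemma inum_at:
  assumes S: "is_scheme X d R" and "i \<le> d" "j \<le> d" "k \<le> d" and mn: "(m, n) \<in> R k"
  shows "inum X R i j k = card {l \<in> X. (m, l) \<in> R i \<and> (l, n) \<in> R j}"
proof -
  obtain m' n' where e: "(SOME mn. mn \<in> R k) = (m', n')" by (cases "SOME mn. mn \<in> R k") auto
  have "(SOME mn. mn \<in> R k) \<in> R k" using mn by (rule someI)
  hence "(m', n') \<in> R k" using e by simp
  have "card {l \<in> X. (m', l) \<in> R i \<and> (l, n') \<in> R j} = card {l \<in> X. (m, l) \<in> R i \<and> (l, n) \<in> R j}"
    by (rule sch_reg[OF S assms(2-4) \<open>(m', n') \<in> R k\<close> mn])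
  thus ?thesis unfolding inum_def e by simp
qed

lemma rel_sub:
  assumes S: "is_scheme X d R" and "i \<le> d" and "(x, z) \<in> R i" shows "x \<in> X" "z \<in> X"
  using sch_sub[OF assms(1,2)] assms(3) by auto

lemma rel_uniq:
  assumes S: "is_scheme X d R" and "i \<le> d" "i' \<le> d" and "p \<in> R i" "p \<in> R i'" shows "i = i'"
proof (rule ccontr)
  assume "i \<noteq> i'"
  hence "R i \<inter> R i' = {}" by (rule sch_dj[OF S assms(2,3)])
  thus False using assms(4,5) by blast
qed

lemma rel_ex:
  assumes S: "is_scheme X d R" and "x \<in> X" "z \<in> X" obtains r where "r \<le> d" "(x, z) \<in> R r"
proof -
  have "(x,z) \<in> (\<Union>c\<in>{0..d}. R c)" using sch_cov[OF S] assms(2,3) by blast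
  thus ?thesis using that by auto
qed

lemma conv_idx_prop:
  assumes S: "is_scheme X d R" and "c \<le> d"
  shows "conv_idx d R c \<le> d \<and> R (conv_idx d R c) = {(f, e). (e, f) \<in> R c}"
proof -
  obtain c' where c': "c' \<le> d" "R c' = {(f, e). (e, f) \<in> R c}" using sch_cv[OF S assms(2)] by blast
  have U: "c'' = c'" if h: "c'' \<le> d \<and> R c'' = {(f, e). (e, f) \<in> R c}" for c''
  proof (rule ccontr)
    assume "c'' \<noteq> c'"
    hence "R c'' \<inter> R c' = {}" using sch_dj[OF S] h c'(1) by blast
    moreover have "R c'' = R c'" using h c'(2) by (simp only:)
    ultimately have "R c' = {}" by (simp only: Int_absorb)
    thus False using sch_ne[OF S c'(1)] by (simp only:)
  qed
  have "conv_idx d R c = c'" unfolding conv_idx_def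
    by (rule the_equality) (use c' U in blast)+
  thus ?thesis using c' by (simp only:)
qed

lemma triple_eval:
  assumes S: "is_scheme X d R" and "i \<le> d" "l \<le> d"
  shows "triple_prod TYPE('f::field) X R y i j l x z =
     (if (y, x) \<in> R i \<and> (x, z) \<in> R j \<and> (y, z) \<in> R l then 1 else (0::'f))"
proof -
  have inner: "(\<Sum>t\<in>X. dual_idem TYPE('f) y (R i) x t * adj_mat TYPE('f) (R j) t s)
      = (if (y, x) \<in> R i \<and> (x, s) \<in> R j then 1 else 0)" for s
  proof -
    have "(\<Sum>t\<in>X. dual_idem TYPE('f) y (R i) x t * adj_mat TYPE('f) (R j) t s)
       = (\<Sum>t\<in>X. if t = x then (if (y, x) \<in> R i \<and> (x, s) \<in> R j then 1 else 0) else 0)"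
      unfolding dual_idem_def adj_mat_def by (intro sum.cong) auto
    also have "\<dots> = (if x \<in> X then (if (y, x) \<in> R i \<and> (x, s) \<in> R j then 1 else 0) else 0)"
      by (rule sum.delta[OF sch_fin[OF S]])
    also have "\<dots> = (if (y, x) \<in> R i \<and> (x, s) \<in> R j then 1 else 0)"
      using rel_sub[OF S assms(2)] by auto
    finally show ?thesis .
  qed
  have "triple_prod TYPE('f::field) X R y i j l x z =
     (\<Sum>s\<in>X. (if (y, x) \<in> R i \<and> (x, s) \<in> R j then 1 else 0) * dual_idem TYPE('f) y (R l) s z)"
    unfolding triple_prod_def mat_mult_def inner ..
  also have "\<dots> = (\<Sum>s\<in>X. if s = z then (if (y, x) \<in> R i \<and> (x, z) \<in> R j \<and> (y, z) \<in> R l then 1 else 0) else 0)"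
    unfolding dual_idem_def by (intro sum.cong) auto
  also have "\<dots> = (if z \<in> X then (if (y, x) \<in> R i \<and> (x, z) \<in> R j \<and> (y, z) \<in> R l then 1 else 0) else 0)"
    by (rule sum.delta[OF sch_fin[OF S]])
  also have "\<dots> = (if (y, x) \<in> R i \<and> (x, z) \<in> R j \<and> (y, z) \<in> R l then 1 else 0)"
    using rel_sub[OF S assms(3)] by auto
  finally show ?thesis .
qed

lemma span_eval:
  assumes S: "is_scheme X d R"
    and Mc: "M = (\<lambda>x z. \<Sum>(i, j, l)\<in>{0..d} \<times> {0..d} \<times> {0..d}. c (i, j, l) * triple_prod TYPE('f::field) X R y i j l x z)"
    and "u \<le> d" "r \<le> d" "v \<le> d" "(y, x) \<in> R u" "(x, z) \<in> R r" "(y, z) \<in> R v"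
  shows "M x z = c (u, r, v)"
proof -
  have "M x z = (\<Sum>p\<in>{0..d} \<times> {0..d} \<times> {0..d}. if p = (u, r, v) then c (u, r, v) else 0)"
    unfolding Mc
  proof (intro sum.cong refl)
    fix p assume p: "p \<in> {0..d} \<times> {0..d} \<times> {0..d}"
    obtain i j l where pe: "p = (i, j, l)" by (cases p) auto
    have ijl: "i \<le> d" "j \<le> d" "l \<le> d" using p pe by auto
    show "(case p of (i, j, l) \<Rightarrow> c (i, j, l) * triple_prod TYPE('f) X R y i j l x z) =
         (if p = (u, r, v) then c (u, r, v) else 0)"
    proof -
      have T: "triple_prod TYPE('f) X R y i j l x z = (if (i, j, l) = (u, r, v) then 1 else 0)"
      proof (cases "(i, j, l) = (u, r, v)")
        case True
        then show ?thesis using triple_eval[OF S ijl(1) ijl(3), of y j x z, where 'f='f] assms(6-8) by simp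
      next
        case False
        have "\<not> ((y, x) \<in> R i \<and> (x, z) \<in> R j \<and> (y, z) \<in> R l)"
          using False rel_uniq[OF S ijl(1) assms(3) _ assms(6)] rel_uniq[OF S ijl(2) assms(4) _ assms(7)]
            rel_uniq[OF S ijl(3) assms(5) _ assms(8)] by blast
        then show ?thesis using triple_eval[OF S ijl(1) ijl(3), of y j x z, where 'f='f] False by simp
      qed
      show ?thesis unfolding pe by (simp add: T)
    qed
  qed
  also have "\<dots> = c (u, r, v)" using assms(3-5) by (subst sum.delta) auto
  finally show ?thesis .
qed

lemma triple_in_span:
  assumes S: "is_scheme X d R" and "i \<le> d" "j \<le> d" "l \<le> d"
  shows "triple_prod TYPE('f::field) X R y i j l \<in> triple_span TYPE('f) X d R y"
  unfolding triple_span_def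
proof (intro CollectI exI[of _ "\<lambda>p. if p = (i, j, l) then 1 else 0"] ext)
  fix x z
  have "(\<Sum>(i', j', l')\<in>{0..d} \<times> {0..d} \<times> {0..d}. (if (i', j', l') = (i, j, l) then 1 else 0) * triple_prod TYPE('f) X R y i' j' l' x z)
     = (\<Sum>p\<in>{0..d} \<times> {0..d} \<times> {0..d}. if p = (i, j, l) then triple_prod TYPE('f) X R y i j l x z else 0)"
  proof (intro sum.cong refl)
    fix p :: "nat \<times> nat \<times> nat"
    obtain i' j' l' where pe: "p = (i', j', l')" by (cases p) auto
    show "(case p of (i', j', l') \<Rightarrow> (if (i', j', l') = (i, j, l) then 1 else 0) * triple_prod TYPE('f) X R y i' j' l' x z) =
        (if p = (i, j, l) then triple_prod TYPE('f) X R y i j l x z else 0)"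
      unfolding pe by simp
  qed
  also have "\<dots> = triple_prod TYPE('f) X R y i j l x z" using assms(2-4) by (subst sum.delta) auto
  finally show "triple_prod TYPE('f) X R y i j l x z = (\<Sum>(i', j', l')\<in>{0..d} \<times> {0..d} \<times> {0..d}. (if (i', j', l') = (i, j, l) then 1 else 0) * triple_prod TYPE('f) X R y i' j' l' x z)" by (rule sym)
qed


fun chainP :: "'f itself \<Rightarrow> 'a set \<Rightarrow> (nat \<Rightarrow> ('a \<times> 'a) set) \<Rightarrow> 'a \<Rightarrow> (nat \<Rightarrow> nat) \<Rightarrow> (nat \<Rightarrow> nat)
   \<Rightarrow> (nat \<Rightarrow> nat) \<Rightarrow> nat \<Rightarrow> ('a \<Rightarrow> 'a \<Rightarrow> 'f::field)" where
  "chainP F X R y i j l 0 = triple_prod F X R y (i 0) (j 0) (l 0)"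
| "chainP F X R y i j l (Suc b) = mat_mult X (chainP F X R y i j l b) (triple_prod F X R y (i (Suc b)) (j (Suc b)) (l (Suc b)))"

lemma unique_mid:
  assumes S: "is_scheme X d R" and "i \<le> d" "j \<le> d" "l \<le> d" and one: "inum X R i j l = 1"
    and yz: "(y, z) \<in> R l"
  obtains x where "(y, x) \<in> R i" "(x, z) \<in> R j" "\<And>t. t \<in> X \<Longrightarrow> ((y, t) \<in> R i \<and> (t, z) \<in> R j) = (t = x)"
proof -
  have "card {t \<in> X. (y, t) \<in> R i \<and> (t, z) \<in> R j} = 1"
    using inum_at[OF S assms(2-4) yz] one by simp
  then obtain x where e: "{t \<in> X. (y, t) \<in> R i \<and> (t, z) \<in> R j} = {x}" by (auto simp: card_Suc_eq)
  show ?thesis using that[of x] e by blast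
qed

lemma chain_prop:
  assumes S: "is_scheme X d R" and TR: "triply_regular TYPE('f::field) X d R" and y: "y \<in> X"
    and bd: "\<forall>b\<le>a. i b \<le> d \<and> j b \<le> d \<and> l b \<le> d"
    and one: "\<forall>b\<le>a. inum X R (i b) (j b) (l b) = 1"
    and lnk: "\<forall>c<a. l c = i (c + 1)"
  shows "b \<le> a \<Longrightarrow> chainP TYPE('f) X R y i j l b \<in> triple_span TYPE('f) X d R y \<and>
     (\<forall>z. (y, z) \<in> R (l b) \<longrightarrow> (\<exists>w. (y, w) \<in> R (i 0) \<and> chainP TYPE('f) X R y i j l b w z = 1 \<and>
        (\<forall>w'. w' \<noteq> w \<longrightarrow> chainP TYPE('f) X R y i j l b w' z = 0)))"
proof (induction b)
  case 0
  have b0: "i 0 \<le> d" "j 0 \<le> d" "l 0 \<le> d" "inum X R (i 0) (j 0) (l 0) = 1" using bd one by auto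
  show ?case
  proof (intro conjI allI impI)
    show "chainP TYPE('f) X R y i j l 0 \<in> triple_span TYPE('f) X d R y"
      using triple_in_span[OF S b0(1-3), where 'f='f] by simp
  next
    fix z assume yz: "(y, z) \<in> R (l 0)"
    obtain x where x: "(y, x) \<in> R (i 0)" "(x, z) \<in> R (j 0)"
      "\<And>t. t \<in> X \<Longrightarrow> ((y, t) \<in> R (i 0) \<and> (t, z) \<in> R (j 0)) = (t = x)"
      using unique_mid[OF S b0 yz] by blast
    show "\<exists>w. (y, w) \<in> R (i 0) \<and> chainP TYPE('f) X R y i j l 0 w z = 1 \<and>
        (\<forall>w'. w' \<noteq> w \<longrightarrow> chainP TYPE('f) X R y i j l 0 w' z = 0)"
    proof (intro exI conjI allI impI)
      show "(y, x) \<in> R (i 0)" by (rule x(1))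
      show "chainP TYPE('f) X R y i j l 0 x z = 1" using triple_eval[OF S b0(1) b0(3), where 'f='f] x yz by simp
      fix w' assume ne: "w' \<noteq> x"
      have "\<not> ((y, w') \<in> R (i 0) \<and> (w', z) \<in> R (j 0))"
      proof
        assume h: "(y, w') \<in> R (i 0) \<and> (w', z) \<in> R (j 0)"
        hence "w' \<in> X" using rel_sub[OF S b0(1)] by blast
        thus False using x(3)[of w'] h ne by blast
      qed
      thus "chainP TYPE('f) X R y i j l 0 w' z = 0" using triple_eval[OF S b0(1) b0(3), where 'f='f]
        by auto
    qed
  qed
next
  case (Suc b)
  hence IH: "chainP TYPE('f) X R y i j l b \<in> triple_span TYPE('f) X d R y"
     "\<And>z. (y, z) \<in> R (l b) \<Longrightarrow> (\<exists>w. (y, w) \<in> R (i 0) \<and> chainP TYPE('f) X R y i j l b w z = 1 \<and>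
        (\<forall>w'. w' \<noteq> w \<longrightarrow> chainP TYPE('f) X R y i j l b w' z = 0))" by auto
  have b0: "i (Suc b) \<le> d" "j (Suc b) \<le> d" "l (Suc b) \<le> d" "inum X R (i (Suc b)) (j (Suc b)) (l (Suc b)) = 1"
    using bd one Suc.prems by auto
  have lk: "i (Suc b) = l b" using lnk Suc.prems by auto
  let ?T = "triple_prod TYPE('f) X R y (i (Suc b)) (j (Suc b)) (l (Suc b))"
  let ?P = "chainP TYPE('f) X R y i j l b"
  show ?case
  proof (intro conjI allI impI)
    show "chainP TYPE('f) X R y i j l (Suc b) \<in> triple_span TYPE('f) X d R y"
      using TR y IH(1) triple_in_span[OF S b0(1-3), where 'f='f] unfolding triply_regular_def by simp
  next
    fix z assume yz: "(y, z) \<in> R (l (Suc b))"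
    obtain x where x: "(y, x) \<in> R (i (Suc b))" "(x, z) \<in> R (j (Suc b))"
      "\<And>t. t \<in> X \<Longrightarrow> ((y, t) \<in> R (i (Suc b)) \<and> (t, z) \<in> R (j (Suc b))) = (t = x)"
      using unique_mid[OF S b0 yz] by blast
    have xX: "x \<in> X" using rel_sub[OF S b0(1) x(1)] by simp
    have ev: "chainP TYPE('f) X R y i j l (Suc b) w' z = ?P w' x" for w'
    proof -
      have "chainP TYPE('f) X R y i j l (Suc b) w' z = (\<Sum>t\<in>X. ?P w' t * ?T t z)"
        by (simp add: mat_mult_def)
      also have "\<dots> = (\<Sum>t\<in>X. if t = x then ?P w' x else 0)"
      proof (intro sum.cong refl)
        fix t assume t: "t \<in> X"
        show "?P w' t * ?T t z = (if t = x then ?P w' x else 0)"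
          using triple_eval[OF S b0(1) b0(3), where 'f='f, of y "j (Suc b)" t z] x(3)[OF t] yz by auto
      qed
      also have "\<dots> = ?P w' x" using xX sch_fin[OF S] by (subst sum.delta) auto
      finally show ?thesis .
    qed
    obtain w where w: "(y, w) \<in> R (i 0)" "?P w x = 1" "\<forall>w'. w' \<noteq> w \<longrightarrow> ?P w' x = 0"
      using IH(2)[of x] x(1) lk by auto
    show "\<exists>w. (y, w) \<in> R (i 0) \<and> chainP TYPE('f) X R y i j l (Suc b) w z = 1 \<and>
        (\<forall>w'. w' \<noteq> w \<longrightarrow> chainP TYPE('f) X R y i j l (Suc b) w' z = 0)"
      using w ev by metis
  qed
qed

theorem corollary4p11:
  fixes X :: "'a set" and d :: nat and R :: "nat \<Rightarrow> ('a \<times> 'a) set"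
  assumes "is_scheme X d R"
    and "triply_regular TYPE('f::field) X d R"
  shows "\<forall>u\<le>d. \<forall>v\<le>d. \<not> bad_pair X d R u v"
proof (intro allI impI notI)
  fix u v assume ud: "u \<le> d" and vd: "v \<le> d" and bp: "bad_pair X d R u v"
  have S: "is_scheme X d R" by (rule assms(1))
  obtain a :: nat and i j l :: "nat \<Rightarrow> nat" where a: "a \<ge> 1" and bd: "\<forall>b\<le>a. i b \<le> d \<and> j b \<le> d \<and> l b \<le> d"
    and i0: "i 0 = u" and la: "l a = v"
    and val: "\<forall>b\<le>a. valency X d R (i b) = 2 \<and> valency X d R (l b) = 2 \<and> inum X R (i b) (j b) (l b) = 1"
    and lnk: "\<forall>c<a. l c = i (c + 1)"
    and cp: "card (cplx_prod X d R (conv_idx d R u) v) = 1"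
    using bp unfolding bad_pair_def by blast
  have one: "\<forall>b\<le>a. inum X R (i b) (j b) (l b) = 1" using val by blast
  have vu: "valency X d R u = 2" using val[rule_format, of 0] i0 by simp
  obtain y z0 where yz0: "(y, z0) \<in> R v" using sch_ne[OF S vd] by fast
  have y: "y \<in> X" "z0 \<in> X" using rel_sub[OF S vd yz0] by auto
  have CP: "chainP TYPE('f) X R y i j l a \<in> triple_span TYPE('f) X d R y \<and>
     (\<forall>z. (y, z) \<in> R (l a) \<longrightarrow> (\<exists>w. (y, w) \<in> R (i 0) \<and> chainP TYPE('f) X R y i j l a w z = 1 \<and>
        (\<forall>w'. w' \<noteq> w \<longrightarrow> chainP TYPE('f) X R y i j l a w' z = 0)))"
    by (rule chain_prop[OF S assms(2) y(1) bd one lnk]) simp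
  then obtain w where w: "(y, w) \<in> R u" "chainP TYPE('f) X R y i j l a w z0 = 1"
    "\<forall>w'. w' \<noteq> w \<longrightarrow> chainP TYPE('f) X R y i j l a w' z0 = 0"
    using yz0 la i0 by auto
  have ci: "conv_idx d R u \<le> d" "R (conv_idx d R u) = {(f, e). (e, f) \<in> R u}"
    using conv_idx_prop[OF S ud] by auto
  have R0: "(y, y) \<in> R 0" using sch_0[OF S] y by blast
  have "card {t \<in> X. (y, t) \<in> R u \<and> (t, y) \<in> R (conv_idx d R u)} = 2"
    using vu inum_at[OF S ud ci(1) _ R0] unfolding valency_def by simp
  hence c2: "card {t \<in> X. (y, t) \<in> R u} = 2" using ci(2) by simp
  obtain w1 where w1: "(y, w1) \<in> R u" "w1 \<noteq> w"
  proof -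
    have "\<not> {t \<in> X. (y, t) \<in> R u} \<subseteq> {w}"
    proof
      assume "{t \<in> X. (y, t) \<in> R u} \<subseteq> {w}"
      hence "card {t \<in> X. (y, t) \<in> R u} \<le> card {w}" by (intro card_mono) auto
      thus False using c2 by simp
    qed
    thus ?thesis using that by blast
  qed
  have wX: "w \<in> X" "w1 \<in> X" using rel_sub[OF S ud] w(1) w1(1) by auto
  obtain r where r: "r \<le> d" "(w, z0) \<in> R r" using rel_ex[OF S wX(1) y(2)] by blast
  obtain r1 where r1: "r1 \<le> d" "(w1, z0) \<in> R r1" using rel_ex[OF S wX(2) y(2)] by blast
  have inc: "q \<in> cplx_prod X d R (conv_idx d R u) v" if "q \<le> d" "(w', z0) \<in> R q" "(y, w') \<in> R u" for q w'
  proof -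
    have "inum X R (conv_idx d R u) v q = card {t \<in> X. (w', t) \<in> R (conv_idx d R u) \<and> (t, z0) \<in> R v}"
      by (rule inum_at[OF S ci(1) vd that(1) that(2)])
    moreover have "y \<in> {t \<in> X. (w', t) \<in> R (conv_idx d R u) \<and> (t, z0) \<in> R v}"
      using y ci(2) that(3) yz0 by auto
    moreover have "finite {t \<in> X. (w', t) \<in> R (conv_idx d R u) \<and> (t, z0) \<in> R v}"
      using sch_fin[OF S] by simp
    ultimately have "inum X R (conv_idx d R u) v q > 0" by (simp only: card_gt_0_iff) blast
    thus ?thesis using that(1) unfolding cplx_prod_def by simp
  qed
  have "r = r1"
  proof -
    obtain q where "cplx_prod X d R (conv_idx d R u) v = {q}" using cp by (auto simp: card_Suc_eq)
    thus ?thesis using inc[OF r w(1)] inc[OF r1 w1(1)] by auto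
  qed
  obtain c :: "nat \<times> nat \<times> nat \<Rightarrow> 'f" where Mc: "chainP TYPE('f) X R y i j l a = (\<lambda>x z. \<Sum>(i, j, l)\<in>{0..d} \<times> {0..d} \<times> {0..d}. c (i, j, l) * triple_prod TYPE('f) X R y i j l x z)"
    using conjunct1[OF CP] unfolding triple_span_def by blast
  have "chainP TYPE('f) X R y i j l a w z0 = c (u, r, v)"
    by (rule span_eval[OF S Mc ud r(1) vd w(1) r(2) yz0])
  moreover have "chainP TYPE('f) X R y i j l a w1 z0 = c (u, r, v)"
    using span_eval[OF S Mc ud r(1) vd w1(1) _ yz0] r1(2) \<open>r = r1\<close> by simp
  ultimately show False using w(2) w(3) w1(2) by simp
qed

end
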